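(* Let $b\in\mathbb{R}$, $\lambda>0$, $E=\{x_2>0\}$, and let $S_b(-\lambda)$ be the integral operator on $L^2(E)$ with kernel $\mathrm{e}^{\mathrm{i} b\phi(\mathbf{x},\mathbf{y})}\frac1{2\pi}\big(K_0(\sqrt\lambda|\mathbf{x}-\mathbf{y}|)-K_0(\sqrt\lambda|\mathbf{x}-\mathbf{y}^*|)\big)$. Then $S_b(-\lambda)$ maps $C_c^\infty(E)$ into $\mathcal{M}$.
   Context: $\phi(\mathbf{x},\mathbf{y})=\tfrac12(y_1-x_1)(x_2+y_2)$, $\mathbf{y}^*=(y_1,-y_2)$, $K_0$ the Macdonald function (modified Bessel function of the second kind of order $0$). $C^\infty(\bar E)$ is the set of smooth functions on $E$ all of whose partial derivatives extend continuously to $\bar E$. $\mathcal{M}$ is the set of all $f\in C^\infty(\bar E)$ such that $f(x_1,0)=0$ for all $x_1\in\mathbb{R}$ and for which there is $c>0$ such that for every $\alpha\in\mathbb{N}_0^2$ there is $C>0$ with $|\partial^\alpha f(\mathbf{x})|\le C\mathrm{e}^{-c|\mathbf{x}|}$ for all $\mathbf{x}\in\bar E$. *)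

theory Defs
  imports "HOL-Analysis.Analysis"
begin

definition upper_half :: "(real \<times> real) set" where
  "upper_half = {x. snd x > 0}"

definition MacdonaldK0 :: "real \<Rightarrow> real" where
  "MacdonaldK0 r = (LBINT t:{0..}. exp (- r * cosh t))"

definition phase :: "real \<times> real \<Rightarrow> real \<times> real \<Rightarrow> real" where
  "phase x y = (1/2) * (fst y - fst x) * (snd x + snd y)"

definition reflect_pt :: "real \<times> real \<Rightarrow> real \<times> real" where
  "reflect_pt y = (fst y, - snd y)"

definition Sb_kernel :: "real \<Rightarrow> real \<Rightarrow> real \<times> real \<Rightarrow> real \<times> real \<Rightarrow> complex" where
  "Sb_kernel b lam x y =
     cis (b * phase x y) *
     complex_of_real ((1 / (2 * pi)) *
        (MacdonaldK0 (sqrt lam * norm (x - y)) - MacdonaldK0 (sqrt lam * norm (x - reflect_pt y))))"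

definition Sb_op :: "real \<Rightarrow> real \<Rightarrow> (real \<times> real \<Rightarrow> complex) \<Rightarrow> real \<times> real \<Rightarrow> complex" where
  "Sb_op b lam f x = (LINT y:upper_half|lborel. Sb_kernel b lam x y * f y)"

definition pd :: "nat \<Rightarrow> (real \<times> real \<Rightarrow> complex) \<Rightarrow> real \<times> real \<Rightarrow> complex" where
  "pd i f x = (if i = 1 then vector_derivative (\<lambda>t. f (t, snd x)) (at (fst x))
               else vector_derivative (\<lambda>t. f (fst x, t)) (at (snd x)))"

definition pd_differentiable :: "nat \<Rightarrow> (real \<times> real \<Rightarrow> complex) \<Rightarrow> real \<times> real \<Rightarrow> bool" where
  "pd_differentiable i f x = (if i = 1 then (\<lambda>t. f (t, snd x)) differentiable (at (fst x))
               else (\<lambda>t. f (fst x, t)) differentiable (at (snd x)))"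

fun pdl :: "nat list \<Rightarrow> (real \<times> real \<Rightarrow> complex) \<Rightarrow> real \<times> real \<Rightarrow> complex" where
  "pdl [] f = f"
| "pdl (i # is) f = pd i (pdl is f)"

definition pdm :: "nat \<times> nat \<Rightarrow> (real \<times> real \<Rightarrow> complex) \<Rightarrow> real \<times> real \<Rightarrow> complex" where
  "pdm \<alpha> f = pdl (replicate (fst \<alpha>) 1 @ replicate (snd \<alpha>) 2) f"

definition smooth_on :: "(real \<times> real) set \<Rightarrow> (real \<times> real \<Rightarrow> complex) \<Rightarrow> bool" where
  "smooth_on S f \<longleftrightarrow>
     (\<forall>is. set is \<subseteq> {1,2} \<longrightarrow>
        continuous_on S (pdl is f) \<and>
        (\<forall>i\<in>{1,2}. \<forall>x\<in>S. pd_differentiable i (pdl is f) x))"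

definition cont_ext :: "(real \<times> real) set \<Rightarrow> (real \<times> real \<Rightarrow> complex) \<Rightarrow> (real \<times> real \<Rightarrow> complex) \<Rightarrow> bool" where
  "cont_ext S h g \<longleftrightarrow> continuous_on (closure S) g \<and> (\<forall>x\<in>S. g x = h x)"

definition smooth_closure :: "(real \<times> real) set \<Rightarrow> (real \<times> real \<Rightarrow> complex) \<Rightarrow> bool" where
  "smooth_closure S f \<longleftrightarrow> smooth_on S f \<and>
     (\<forall>is. set is \<subseteq> {1,2} \<longrightarrow> (\<exists>g. cont_ext S (pdl is f) g))"

definition Cc_infty :: "(real \<times> real) set \<Rightarrow> (real \<times> real \<Rightarrow> complex) set" where
  "Cc_infty S = {f. smooth_on S f \<and> (\<exists>K. compact K \<and> K \<subseteq> S \<and> (\<forall>x. x \<notin> K \<longrightarrow> f x = 0))}"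

text \<open>The class M; values on the boundary are those of the continuous extensions.\<close>
definition classM :: "(real \<times> real \<Rightarrow> complex) set" where
  "classM = {f. smooth_closure upper_half f \<and>
     (\<forall>g. cont_ext upper_half f g \<longrightarrow> (\<forall>x1. g (x1, 0) = 0)) \<and>
     (\<exists>c>0. \<forall>\<alpha>::nat \<times> nat. \<exists>C. \<forall>g. cont_ext upper_half (pdm \<alpha> f) g \<longrightarrow>
         (\<forall>x\<in>closure upper_half. norm (g x) \<le> C * exp (- c * norm x)))}"

end

theory Submission
  imports Defs "HOL-Probability.Distributions"
begin

lemma cosh_meas[measurable]: "(cosh::real\<Rightarrow>real) \<in> borel_measurable borel"
  by (intro borel_measurable_continuous_onI continuous_intros)

lemma K0_meas[measurable]: "MacdonaldK0 \<in> borel_measurable borel"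
  unfolding MacdonaldK0_def[abs_def] set_lebesgue_integral_def
  by measurable

lemma K0_nonneg: "0 \<le> MacdonaldK0 r"
  unfolding MacdonaldK0_def set_lebesgue_integral_def
  by (rule integral_nonneg_AE) (auto simp: indicator_def)

lemma cosh_lower: "t \<ge> 0 \<Longrightarrow> 1/2 + t^2/4 \<le> cosh (t::real)"
proof -
  assume t: "t \<ge> 0"
  have a: "1 + t + t^2/2 \<le> exp t" using exp_lower_Taylor_quadratic[OF t] by simp
  have b: "1 + (-t) \<le> exp (-t)" by (rule exp_ge_add_one_self)
  show ?thesis using a b unfolding cosh_def by (simp add: field_simps)
qed

lemma gauss_scaled:
  assumes c: "c > (0::real)"
  shows "integrable lborel (\<lambda>t. indicator {0..} t * exp (- ((c*t)^2)))"
    and "(\<integral>t. indicator {0..} t * exp (- ((c*t)^2)) \<partial>lborel) = sqrt pi / 2 / c"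
proof -
  define g where "g = (\<lambda>x::real. indicator {0..} x *\<^sub>R exp (- (x^2)))"
  have G: "has_bochner_integral lborel g (sqrt pi / 2)" unfolding g_def by (rule gaussian_moment_0)
  have ind: "indicator {0..} (c*t) = (indicator {0..} t :: real)" for t
    using c by (auto simp: indicator_def zero_le_mult_iff)
  have eq: "(\<lambda>t. g (0 + c * t)) = (\<lambda>t. indicator {0..} t * exp (- ((c*t)^2)))"
    by (auto simp: g_def ind)
  have "integrable lborel (\<lambda>t. g (0 + c * t))"
    using G c by (subst lborel_integrable_real_affine_iff) (auto simp: has_bochner_integral_iff)
  then show "integrable lborel (\<lambda>t. indicator {0..} t * exp (- ((c*t)^2)))" by (simp only: eq)
  have "integral\<^sup>L lborel g = \<bar>c\<bar> *\<^sub>R (\<integral>t. g (0 + c * t) \<partial>lborel)"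
    using c by (intro lborel_integral_real_affine) auto
  then have "sqrt pi / 2 = c * (\<integral>t. indicator {0..} t * exp (- ((c*t)^2)) \<partial>lborel)"
    using G c by (simp add: has_bochner_integral_iff eq[simplified])
  then show "(\<integral>t. indicator {0..} t * exp (- ((c*t)^2)) \<partial>lborel) = sqrt pi / 2 / c"
    using c by (simp add: field_simps)
qed

lemma K0_bound:
  assumes r: "r > 0"
  shows "MacdonaldK0 r \<le> sqrt pi / sqrt r * exp (-r/2)"
proof -
  define c where "c = sqrt r / 2"
  have c: "c > 0" using r by (simp add: c_def)
  have c2: "(c*t)^2 = r * t^2 / 4" for t using r by (simp add: c_def power_mult_distrib power_divide)
  have "MacdonaldK0 r = (\<integral>t. indicator {0..} t *\<^sub>R exp (- r * cosh t) \<partial>lborel)"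
    by (simp add: MacdonaldK0_def set_lebesgue_integral_def)
  also have "\<dots> \<le> (\<integral>t. exp (-r/2) * (indicator {0..} t * exp (- ((c*t)^2))) \<partial>lborel)"
  proof (rule integral_mono')
    show "integrable lborel (\<lambda>t. exp (-r/2) * (indicator {0..} t * exp (- ((c*t)^2))))"
      using gauss_scaled(1)[OF c] by simp
    fix t :: real
    show "0 \<le> exp (-r/2) * (indicator {0..} t * exp (- ((c*t)^2)))" by simp
    show "indicator {0..} t *\<^sub>R exp (- r * cosh t) \<le> exp (-r/2) * (indicator {0..} t * exp (- ((c*t)^2)))"
    proof (cases "t \<ge> 0")
      case True
      have "r * (1/2 + t^2/4) \<le> r * cosh t" using cosh_lower[OF True] r by simp
      then have "exp (- r * cosh t) \<le> exp (-r/2 + - ((c*t)^2))" unfolding c2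
        by (simp add: algebra_simps)
      also have "\<dots> = exp (-r/2) * exp (- ((c*t)^2))" by (rule exp_add)
      finally show ?thesis using True by simp
    qed simp
  qed
  also have "\<dots> = exp (-r/2) * (sqrt pi / 2 / c)" using gauss_scaled(2)[OF c] by simp
  also have "\<dots> = sqrt pi / sqrt r * exp (-r/2)" by (simp add: c_def)
  finally show ?thesis .
qed

lemma nn_gamma_fin:
  assumes a: "a > 0" and p: "p > -1"
  shows "(\<integral>\<^sup>+t. ennreal (indicator {0..} t * t powr p * exp (-a*t)) \<partial>lborel) < \<infinity>"
proof -
  define h where "h = (\<lambda>t::real. ennreal (indicator {0..} t * t powr p * exp (-a*t)))"
  have [measurable]: "h \<in> borel_measurable borel" unfolding h_def by measurable
  have "(\<integral>\<^sup>+t. h t \<partial>lborel) = ennreal \<bar>1/a\<bar> * (\<integral>\<^sup>+x. h (0 + (1/a) * x) \<partial>lborel)"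
    using a by (intro nn_integral_real_affine) auto
  also have "(\<lambda>x. h (0 + (1/a) * x)) = (\<lambda>x. ennreal (a powr (-p)) * ennreal (indicator {0..} x * x powr ((p+1) - 1) / exp x))"
  proof
    fix x :: real
    show "h (0 + (1/a) * x) = ennreal (a powr (-p)) * ennreal (indicator {0..} x * x powr ((p+1) - 1) / exp x)"
    proof (cases "x \<ge> 0")
      case True
      have "(x/a) powr p = x powr p / a powr p" using True a by (simp add: powr_divide)
      then show ?thesis using True a
        by (simp add: h_def ennreal_mult''[symmetric] powr_minus field_simps exp_minus indicator_def)
    next
      case False
      then show ?thesis using a by (simp add: h_def indicator_def zero_le_mult_iff zero_le_divide_iff)
    qed
  qed
  also have "(\<integral>\<^sup>+x. ennreal (a powr (-p)) * ennreal (indicator {0..} x * x powr ((p+1) - 1) / exp x) \<partial>lborel)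
      = ennreal (a powr (-p)) * Gamma (p+1)"
    using p Gamma_conv_nn_integral_real[of "p+1"] by (subst nn_integral_cmult) auto
  finally show ?thesis unfolding h_def by (simp add: ennreal_mult_less_top)
qed

lemma one_le_sqrt_sum: "t > 0 \<Longrightarrow> 1 \<le> 1 / sqrt t + sqrt (t::real)"
proof -
  assume t: "t > 0"
  show ?thesis
  proof (cases "t \<le> 1")
    case True
    then have "sqrt t \<le> 1" using t by simp
    then have "1 \<le> 1 / sqrt t" using t by (simp add: field_simps)
    moreover have "0 \<le> sqrt t" using t by simp
    ultimately show ?thesis by linarith
  next
    case False
    then have "1 \<le> sqrt t" by simp
    moreover have "0 \<le> 1 / sqrt t" using t by simp
    ultimately show ?thesis by linarith
  qed
qed

lemma u_fin:
  assumes a: "a > 0"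
  shows "(\<integral>\<^sup>+t. ennreal ((1 + 1/sqrt \<bar>t\<bar>) * exp (-a*\<bar>t\<bar>)) \<partial>lborel) < \<infinity>"
proof -
  define v where "v = (\<lambda>t::real. ennreal (indicator {0..} t * (2 / sqrt t + sqrt t) * exp (-a*t)))"
  have vm[measurable]: "v \<in> borel_measurable borel" unfolding v_def by measurable
  have v_eq: "v t = ennreal 2 * ennreal (indicator {0..} t * t powr (-1/2) * exp (-a*t))
      + ennreal (indicator {0..} t * t powr (1/2) * exp (-a*t))" for t
  proof (cases "t > 0")
    case True
    define X where "X = indicator {0..} t * t powr (-1/2) * exp (-a*t)"
    define Y where "Y = indicator {0..} t * t powr (1/2) * exp (-a*t)"
    have X: "X \<ge> 0" "Y \<ge> 0" unfolding X_def Y_def by auto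
    have "indicator {0..} t * (2 / sqrt t + sqrt t) * exp (-a*t) = 2 * X + Y"
      using True unfolding X_def Y_def by (simp add: powr_minus powr_half_sqrt field_simps)
    then have "v t = ennreal (2 * X + Y)" unfolding v_def by simp
    also have "\<dots> = ennreal 2 * ennreal X + ennreal Y" using X by (simp add: ennreal_plus ennreal_mult)
    finally show ?thesis unfolding X_def Y_def .
  qed (auto simp: v_def indicator_def)
  have "(\<integral>\<^sup>+t. v t \<partial>lborel) = ennreal 2 * (\<integral>\<^sup>+t. ennreal (indicator {0..} t * t powr (-1/2) * exp (-a*t)) \<partial>lborel)
     + (\<integral>\<^sup>+t. ennreal (indicator {0..} t * t powr (1/2) * exp (-a*t)) \<partial>lborel)"
    unfolding v_eq by (subst nn_integral_add) (auto simp: nn_integral_cmult)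
  also have "\<dots> < \<infinity>" using nn_gamma_fin[OF a, of "-1/2"] nn_gamma_fin[OF a, of "1/2"]
    by (simp add: ennreal_mult_less_top)
  finally have v_fin: "(\<integral>\<^sup>+t. v t \<partial>lborel) < \<infinity>" .
  have v_refl: "(\<integral>\<^sup>+t. v t \<partial>lborel) = (\<integral>\<^sup>+t. v (-t) \<partial>lborel)"
    using nn_integral_real_affine[OF vm, of "-1" 0] by simp
  have "(\<integral>\<^sup>+t. ennreal ((1 + 1/sqrt \<bar>t\<bar>) * exp (-a*\<bar>t\<bar>)) \<partial>lborel) \<le> (\<integral>\<^sup>+t. v t + v (-t) \<partial>lborel)"
  proof (rule nn_integral_mono_AE)
    show "AE t in lborel. ennreal ((1 + 1/sqrt \<bar>t\<bar>) * exp (-a*\<bar>t\<bar>)) \<le> v t + v (-t)"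
      using AE_lborel_singleton[of 0]
    proof eventually_elim
      case (elim t)
      show ?case
      proof (cases "t > 0")
        case True
        have "1 + 1/sqrt t \<le> 2 / sqrt t + sqrt t" using one_le_sqrt_sum[OF True] by simp
        then have "ennreal ((1 + 1/sqrt \<bar>t\<bar>) * exp (-a*\<bar>t\<bar>)) \<le> v t"
          using True unfolding v_def by (auto intro!: ennreal_leI mult_right_mono)
        then show ?thesis by (rule order_trans) simp
      next
        case False
        then have t: "-t > 0" using elim by simp
        have "1 + 1/sqrt (-t) \<le> 2 / sqrt (-t) + sqrt (-t)" using one_le_sqrt_sum[OF t] by simp
        then have "ennreal ((1 + 1/sqrt \<bar>t\<bar>) * exp (-a*\<bar>t\<bar>)) \<le> v (-t)"
          using t unfolding v_def by (auto intro!: ennreal_leI mult_right_mono)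
        then show ?thesis by (rule order_trans) simp
      qed
    qed
  qed
  also have "\<dots> = (\<integral>\<^sup>+t. v t \<partial>lborel) + (\<integral>\<^sup>+t. v (-t) \<partial>lborel)"
    by (rule nn_integral_add) auto
  also have "\<dots> < \<infinity>" using v_fin v_refl by simp
  finally show ?thesis .
qed

definition kk :: "real \<Rightarrow> real \<times> real \<Rightarrow> complex" where
  "kk lam z = complex_of_real ((1/(2*pi)) * MacdonaldK0 (sqrt lam * norm z))"

lemma kk_meas[measurable]: "kk lam \<in> borel_measurable borel"
  unfolding kk_def[abs_def] by measurable

lemma norm_kk: "norm (kk lam z) = (1/(2*pi)) * MacdonaldK0 (sqrt lam * norm z)"
  unfolding kk_def norm_of_real using K0_nonneg by simp

lemma prod_basis_real2: "(\<Prod>b\<in>(Basis::(real\<times>real) set). f (x \<bullet> b)) = f (fst x) * (f (snd x) :: ennreal)"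
  by (simp add: Basis_prod_def inner_prod_def prod.union_disjoint mult.commute)

lemma kk_int:
  assumes lam: "lam > 0"
  shows "integrable lborel (\<lambda>z::real\<times>real. norm (kk lam z) * exp (sqrt lam / 4 * norm z))"
proof -
  define \<delta> where "\<delta> = sqrt lam / 4"
  define a where "a = \<delta> / 2"
  have \<delta>: "\<delta> > 0" and a: "a > 0" using lam by (auto simp: \<delta>_def a_def)
  define A where "A = 1 / (2 * sqrt pi * sqrt (sqrt lam))"
  have A: "A > 0" using lam by (simp add: A_def)
  define u where "u = (\<lambda>t::real. (1 + 1/sqrt \<bar>t\<bar>) * exp (-a*\<bar>t\<bar>))"
  have u0: "u t \<ge> 0" for t unfolding u_def by simp
  have [measurable]: "u \<in> borel_measurable borel" unfolding u_def by measurable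
  define W where "W = (\<lambda>z::real\<times>real. A * (u (fst z) * u (snd z)))"
  have Um: "(\<lambda>x::real\<times>real. ennreal (u (fst x)) * ennreal (u (snd x))) \<in> borel_measurable borel"
    by (subst borel_prod[symmetric]) measurable
  have "integrable lborel W"
  proof (rule integrableI_nonneg)
    have "W \<in> borel_measurable (borel \<Otimes>\<^sub>M borel)" unfolding W_def by measurable
    then show "W \<in> borel_measurable lborel" by (simp add: borel_prod)
    show "AE x in lborel. 0 \<le> W x" using A u0 by (simp add: W_def)
    have "(\<integral>\<^sup>+x. ennreal (W x) \<partial>lborel) = ennreal A * (\<integral>\<^sup>+x. (\<Prod>b\<in>(Basis::(real\<times>real) set). ennreal (u (x \<bullet> b))) \<partial>lborel)"
      unfolding prod_basis_real2[of "\<lambda>t. ennreal (u t)"] W_def using A u0 Um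
      by (subst nn_integral_cmult[symmetric]) (auto simp: ennreal_mult)
    also have "\<dots> = ennreal A * (\<Prod>b\<in>(Basis::(real\<times>real) set). (\<integral>\<^sup>+t. ennreal (u t) \<partial>lborel))"
      by (subst nn_integral_lborel_prod) auto
    also have "\<dots> < \<infinity>"
      using u_fin[OF a] unfolding u_def by (simp add: Basis_prod_def prod.union_disjoint ennreal_mult_less_top)
    finally show "(\<integral>\<^sup>+x. ennreal (W x) \<partial>lborel) < \<infinity>" .
  qed
  then show ?thesis
  proof (rule Bochner_Integration.integrable_bound)
    show "(\<lambda>z::real\<times>real. norm (kk lam z) * exp (sqrt lam / 4 * norm z)) \<in> borel_measurable lborel"
      by measurable
    show "AE z in lborel. norm (norm (kk lam z) * exp (sqrt lam / 4 * norm z)) \<le> norm (W z)"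
      using AE_lborel_singleton[of 0]
    proof eventually_elim
      case (elim z)
      define n where "n = norm z"
      have n: "n > 0" using elim by (simp add: n_def)
      have r: "sqrt lam * n > 0" using n lam by simp
      have "norm (kk lam z) * exp (\<delta> * n) \<le> (1/(2*pi)) * (sqrt pi / sqrt (sqrt lam * n) * exp (-(sqrt lam * n)/2)) * exp (\<delta> * n)"
        unfolding norm_kk n_def[symmetric] using K0_bound[OF r] by (intro mult_right_mono mult_left_mono) auto
      also have "\<dots> = A / sqrt n * (exp (-(sqrt lam * n)/2) * exp (\<delta> * n))"
        using lam n by (simp add: A_def real_sqrt_mult field_simps)
      also have "exp (-(sqrt lam * n)/2) * exp (\<delta> * n) = exp (-\<delta> * n)"
        unfolding exp_add[symmetric] by (simp add: \<delta>_def field_simps)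
      finally have s1: "norm (kk lam z) * exp (\<delta> * n) \<le> A * (1 / sqrt n) * exp (-\<delta> * n)" by simp
      define z1 z2 where "z1 = fst z" and "z2 = snd z"
      have zz: "z = (z1, z2)" by (simp add: z1_def z2_def)
      have n1: "\<bar>z1\<bar> \<le> n" and n2: "\<bar>z2\<bar> \<le> n" unfolding n_def zz using norm_fst_le[where x=z1 and y=z2] norm_snd_le[where x=z1 and y=z2] by auto
      have g: "1 / sqrt n \<le> (1 + 1/sqrt \<bar>z1\<bar>) * (1 + 1/sqrt \<bar>z2\<bar>)"
      proof (cases "z1 = 0")
        case True
        then have "n = \<bar>z2\<bar>" unfolding n_def zz by simp
        then show ?thesis using True by simp
      next
        case False
        then have "1 / sqrt n \<le> 1 / sqrt \<bar>z1\<bar>" using n1 by (simp add: frac_le)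
        also have "\<dots> \<le> (1 + 1/sqrt \<bar>z1\<bar>) * 1" by simp
        also have "\<dots> \<le> (1 + 1/sqrt \<bar>z1\<bar>) * (1 + 1/sqrt \<bar>z2\<bar>)"
          by (intro mult_left_mono) auto
        finally show ?thesis .
      qed
      have e: "exp (-\<delta> * n) \<le> exp (-a*\<bar>z1\<bar>) * exp (-a*\<bar>z2\<bar>)"
      proof -
        have "\<delta> * \<bar>z1\<bar> \<le> \<delta> * n" "\<delta> * \<bar>z2\<bar> \<le> \<delta> * n" using n1 n2 \<delta> by auto
        then show ?thesis unfolding exp_add[symmetric] by (simp add: a_def)
      qed
      have "norm (kk lam z) * exp (\<delta> * n) \<le> A * ((1 + 1/sqrt \<bar>z1\<bar>) * (1 + 1/sqrt \<bar>z2\<bar>)) * (exp (-a*\<bar>z1\<bar>) * exp (-a*\<bar>z2\<bar>))"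
      proof -
        have "A * (1 / sqrt n) \<le> A * ((1 + 1/sqrt \<bar>z1\<bar>) * (1 + 1/sqrt \<bar>z2\<bar>))"
          using g A by (intro mult_left_mono) auto
        then have "A * (1 / sqrt n) * exp (-\<delta> * n) \<le> A * ((1 + 1/sqrt \<bar>z1\<bar>) * (1 + 1/sqrt \<bar>z2\<bar>)) * (exp (-a*\<bar>z1\<bar>) * exp (-a*\<bar>z2\<bar>))"
          by (rule mult_mono[OF _ e]) (use A in \<open>auto intro!: mult_nonneg_nonneg\<close>)
        then show ?thesis using s1 by linarith
      qed
      also have "\<dots> = W z" by (simp add: W_def u_def z1_def z2_def)
      finally show ?case using A u0 by (simp add: n_def \<delta>_def W_def)
    qed
  qed
qed

lemma open_upper_half: "open upper_half"
  unfolding upper_half_def by (intro open_Collect_less continuous_intros)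

lemma hvd_zero_near:
  fixes g :: "real \<Rightarrow> complex"
  assumes "open V" "t \<in> V" "\<And>s. s \<in> V \<Longrightarrow> g s = 0"
  shows "(g has_vector_derivative 0) (at t)"
  by (rule has_vector_derivative_transform_within_open[OF has_vector_derivative_const assms(1,2)])
     (use assms(3) in auto)

lemma cc_global:
  assumes "f \<in> Cc_infty upper_half"
  obtains K where "compact K" "K \<subseteq> upper_half"
    "\<And>is y. set is \<subseteq> {1,2} \<Longrightarrow> y \<notin> K \<Longrightarrow> pdl is f y = 0"
    "\<And>is. set is \<subseteq> {1,2} \<Longrightarrow> continuous_on UNIV (pdl is f)"
    "\<And>is y. set is \<subseteq> {1,2} \<Longrightarrow> ((\<lambda>t. pdl is f (t, snd y)) has_vector_derivative pdl (1#is) f y) (at (fst y))"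
    "\<And>is y. set is \<subseteq> {1,2} \<Longrightarrow> ((\<lambda>t. pdl is f (fst y, t)) has_vector_derivative pdl (2#is) f y) (at (snd y))"
proof -
  from assms obtain K where sm: "smooth_on upper_half f" and K: "compact K" "K \<subseteq> upper_half"
    and z: "\<And>x. x \<notin> K \<Longrightarrow> f x = 0"
    unfolding Cc_infty_def by auto
  have oU: "open (- K)" using K(1) by (simp add: compact_imp_closed open_Compl)
  have V1: "open {t. (t, snd y) \<in> - K}" for y
    by (rule open_vimage[OF oU, of "\<lambda>t. (t, snd y)", unfolded vimage_def]) (intro continuous_intros)
  have V2: "open {t. (fst y, t) \<in> - K}" for y
    by (rule open_vimage[OF oU, of "\<lambda>t. (fst y, t)", unfolded vimage_def]) (intro continuous_intros)
  have Z: "pdl is f y = 0" if "y \<notin> K" for "is" y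
    using that
  proof (induction "is" arbitrary: y)
    case Nil
    then show ?case using z by simp
  next
    case (Cons i "is")
    have d1: "((\<lambda>t. pdl is f (t, snd y)) has_vector_derivative 0) (at (fst y))"
      by (rule hvd_zero_near[OF V1]) (use Cons in auto)
    have d2: "((\<lambda>t. pdl is f (fst y, t)) has_vector_derivative 0) (at (snd y))"
      by (rule hvd_zero_near[OF V2]) (use Cons in auto)
    show ?case using vector_derivative_at[OF d1] vector_derivative_at[OF d2]
      by (simp add: pd_def)
  qed
  have D1: "((\<lambda>t. pdl is f (t, snd y)) has_vector_derivative pdl (1#is) f y) (at (fst y))"
    if "set is \<subseteq> {1,2}" for "is" y
  proof (cases "y \<in> K")
    case True
    then have "y \<in> upper_half" using K by auto
    then have "pd_differentiable 1 (pdl is f) y" using sm that unfolding smooth_on_def by auto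
    then show ?thesis by (simp add: pd_differentiable_def pd_def vector_derivative_works)
  next
    case False
    have d1: "((\<lambda>t. pdl is f (t, snd y)) has_vector_derivative 0) (at (fst y))"
      by (rule hvd_zero_near[OF V1]) (use False Z in auto)
    then show ?thesis using Z[OF False, of "1#is"] by simp
  qed
  have D2: "((\<lambda>t. pdl is f (fst y, t)) has_vector_derivative pdl (2#is) f y) (at (snd y))"
    if "set is \<subseteq> {1,2}" for "is" y
  proof (cases "y \<in> K")
    case True
    then have "y \<in> upper_half" using K by auto
    then have "pd_differentiable 2 (pdl is f) y" using sm that unfolding smooth_on_def by auto
    then show ?thesis by (simp add: pd_differentiable_def pd_def vector_derivative_works)
  next
    case False
    have d1: "((\<lambda>t. pdl is f (fst y, t)) has_vector_derivative 0) (at (snd y))"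
      by (rule hvd_zero_near[OF V2]) (use False Z in auto)
    then show ?thesis using Z[OF False, of "2#is"] by simp
  qed
  have C: "continuous_on UNIV (pdl is f)" if "set is \<subseteq> {1,2}" for "is"
  proof (rule continuous_at_imp_continuous_on, rule ballI)
    fix y :: "real \<times> real"
    show "isCont (pdl is f) y"
    proof (cases "y \<in> K")
      case True
      then have "y \<in> upper_half" using K by auto
      moreover have "continuous_on upper_half (pdl is f)" using sm that unfolding smooth_on_def by auto
      ultimately show ?thesis using open_upper_half by (simp add: continuous_on_eq_continuous_at)
    next
      case False
      have "continuous_on (-K) (pdl is f)"
        by (rule continuous_on_cong[THEN iffD1, OF refl _ continuous_on_const[of _ 0]]) (use Z in auto)
      then show ?thesis using False oU by (simp add: continuous_on_eq_continuous_at)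
    qed
  qed
  show ?thesis by (rule that[OF K Z C D1 D2]) auto
qed

lemma mvt_vec:
  fixes g :: "real \<Rightarrow> 'a::real_normed_vector"
  assumes d: "\<And>t. (g has_vector_derivative g' t) (at t)" and b: "\<And>t. norm (g' t) \<le> B"
  shows "norm (g s - g t) \<le> B * \<bar>s - t\<bar>"
proof -
  have B: "0 \<le> B" using b[of 0] norm_ge_zero order_trans by blast
  have "norm (g s - g t) \<le> B * norm (s - t)"
  proof (rule differentiable_bound[of UNIV g "\<lambda>t u. u *\<^sub>R g' t" B])
    fix x :: real
    show "(g has_derivative (\<lambda>u. u *\<^sub>R g' x)) (at x within UNIV)"
      using d[of x] by (simp add: has_vector_derivative_def)
    show "onorm (\<lambda>u. u *\<^sub>R g' x) \<le> B"
    proof (rule onorm_bound[OF B])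
      fix u :: real
      show "norm (u *\<^sub>R g' x) \<le> B * norm u" using b[of x] by (simp add: mult.commute) (metis abs_ge_zero mult.commute mult_left_mono)
    qed
  qed auto
  then show ?thesis by simp
qed

lemma pow_le_fact_exp:
  assumes y: "0 \<le> (y::real)"
  shows "y^n \<le> fact n * exp y"
proof -
  have "(\<Sum>k\<in>{n}. y^k /\<^sub>R fact k) \<le> (\<Sum>k. y^k /\<^sub>R fact k)"
    by (rule sum_le_suminf) (use summable_exp_generic[of y] y in auto)
  then have "y^n / fact n \<le> exp y" by (simp add: exp_def divide_inverse mult.commute)
  then show ?thesis by (simp add: field_simps)
qed

lemma shift_hvd:
  fixes g :: "real \<Rightarrow> 'a::real_normed_vector"
  assumes "(g has_vector_derivative D) (at (t0 - c))"
  shows "((\<lambda>t. g (t - c)) has_vector_derivative D) (at t0)"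
proof -
  have "((\<lambda>t. t - c) has_vector_derivative 1) (at t0)"
    using has_vector_derivative_diff[OF has_vector_derivative_id has_vector_derivative_const] by simp
  from vector_diff_chain_at[OF this] assms show ?thesis by (simp add: o_def)
qed

lemma refl_hvd:
  fixes g :: "real \<Rightarrow> 'a::real_normed_vector"
  assumes "(g has_vector_derivative D) (at (- t0 - c))"
  shows "((\<lambda>t. g (- t - c)) has_vector_derivative - D) (at t0)"
proof -
  have "((\<lambda>t. - t - c) has_vector_derivative -1) (at t0)"
    using has_vector_derivative_diff[OF has_vector_derivative_minus[OF has_vector_derivative_id] has_vector_derivative_const] by simp
  from vector_diff_chain_at[OF this] assms show ?thesis by (simp add: o_def)
qed

lemma cis_lin_hvd:
  "((\<lambda>t. cis (b * (A - B * t))) has_vector_derivative (\<i> * complex_of_real (- b * B) * cis (b * (A - B * t0)))) (at t0)"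
proof -
  have "((\<lambda>w. exp (\<i> * (of_real b * (of_real A - of_real B * w)))) has_field_derivative
      exp (\<i> * (of_real b * (of_real A - of_real B * of_real t0))) * (\<i> * (of_real b * (- of_real B)))) (at (of_real t0))"
    by (auto intro!: derivative_eq_intros)
  from has_vector_derivative_real_field[OF this]
  have "((\<lambda>t. exp (\<i> * (of_real b * (of_real A - of_real B * of_real t)))) has_vector_derivative
      exp (\<i> * (of_real b * (of_real A - of_real B * of_real t0))) * (\<i> * (of_real b * (- of_real B)))) (at t0)" .
  moreover have e: "exp (\<i> * (of_real b * (of_real A - of_real B * of_real t))) = cis (b * (A - B * t))" for t
    by (simp add: cis_conv_exp)
  ultimately show ?thesis by (simp add: e mult.commute mult.left_commute)
qed

lemma cont_cis_lin: "continuous_on UNIV (\<lambda>x::real\<times>real. cis (g x))" if "continuous_on UNIV g" for g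
  using that unfolding cis_conv_exp by (intro continuous_intros) auto

locale setting =
  fixes F :: "real \<times> real \<Rightarrow> complex" and K :: "(real \<times> real) set" and b lam :: real
  assumes K: "compact K"
    and Fz: "\<And>is y. set is \<subseteq> {1,2} \<Longrightarrow> y \<notin> K \<Longrightarrow> pdl is F y = 0"
    and Fc: "\<And>is. set is \<subseteq> {1,2} \<Longrightarrow> continuous_on UNIV (pdl is F)"
    and FD1: "\<And>is y. set is \<subseteq> {1,2} \<Longrightarrow> ((\<lambda>t. pdl is F (t, snd y)) has_vector_derivative pdl (1#is) F y) (at (fst y))"
    and FD2: "\<And>is y. set is \<subseteq> {1,2} \<Longrightarrow> ((\<lambda>t. pdl is F (fst y, t)) has_vector_derivative pdl (2#is) F y) (at (snd y))"
    and lam: "lam > 0"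
begin

definition Rk where "Rk = (SOME R. \<forall>y\<in>K. norm y \<le> R)"

lemma Rk: "y \<in> K \<Longrightarrow> norm y \<le> Rk"
proof -
  have "\<exists>R. \<forall>y\<in>K. norm y \<le> R" using compact_imp_bounded[OF K] by (auto simp: bounded_iff)
  then have "\<forall>y\<in>K. norm y \<le> Rk" unfolding Rk_def by (rule someI_ex)
  then show "y \<in> K \<Longrightarrow> norm y \<le> Rk" by blast
qed

lemma Fb: "set is \<subseteq> {1,2} \<Longrightarrow> \<exists>M. \<forall>y. norm (pdl is F y) \<le> M"
proof -
  assume i: "set is \<subseteq> {1,2}"
  have "compact (pdl is F ` K)"
    by (rule compact_continuous_image[OF continuous_on_subset[OF Fc[OF i]] K]) auto
  from compact_imp_bounded[OF this] obtain M where "\<forall>v\<in>pdl is F ` K. norm v \<le> M"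
    by (auto simp: bounded_iff)
  then have M: "\<And>y. y \<in> K \<Longrightarrow> norm (pdl is F y) \<le> M" by blast
  have "norm (pdl is F y) \<le> max M 0" for y
    using M[of y] Fz[OF i, of y] by (cases "y \<in> K") auto
  then show ?thesis by blast
qed

definition \<gamma> where "\<gamma> = sqrt lam / 8"

lemma \<gamma>: "\<gamma> > 0" using lam by (simp add: \<gamma>_def)

inductive_set Cl :: "(real \<times> real \<Rightarrow> real \<times> real \<Rightarrow> complex) set" where
  G1: "set is \<subseteq> {1,2} \<Longrightarrow> (\<lambda>x z. of_real (fst z) ^ n * cis (b * (fst z * snd z / 2 - fst z * snd x)) * pdl is F (x - z)) \<in> Cl"
| G2: "set is \<subseteq> {1,2} \<Longrightarrow> (\<lambda>x z. cis (b * (fst z * snd z / 2)) * pdl is F (reflect_pt x - z)) \<in> Cl"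
| Add: "H1 \<in> Cl \<Longrightarrow> H2 \<in> Cl \<Longrightarrow> (\<lambda>x z. H1 x z + H2 x z) \<in> Cl"
| Sm: "H \<in> Cl \<Longrightarrow> (\<lambda>x z. c * H x z) \<in> Cl"

lemma Cl_cont_z: "H \<in> Cl \<Longrightarrow> continuous_on UNIV (H x)"
proof (induction rule: Cl.induct)
  case (G1 "is" n)
  have "continuous_on UNIV (\<lambda>z. pdl is F (x - z))"
    by (rule continuous_on_compose2[OF Fc[OF G1]]) (auto intro: continuous_intros)
  moreover have "continuous_on UNIV (\<lambda>z::real\<times>real. cis (b * (fst z * snd z / 2 - fst z * snd x)))"
    by (intro cont_cis_lin continuous_intros) auto
  ultimately show ?case by (intro continuous_intros) auto
next
  case (G2 "is")
  have "continuous_on UNIV (\<lambda>z. pdl is F (reflect_pt x - z))"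
    by (rule continuous_on_compose2[OF Fc[OF G2]]) (auto intro: continuous_intros)
  moreover have "continuous_on UNIV (\<lambda>z::real\<times>real. cis (b * (fst z * snd z / 2)))"
    by (intro cont_cis_lin continuous_intros) auto
  ultimately show ?case by (intro continuous_intros) auto
qed (auto intro: continuous_intros)

lemma cont_reflect: "continuous_on UNIV reflect_pt"
  unfolding reflect_pt_def by (intro continuous_intros)

lemma Cl_cont_x: "H \<in> Cl \<Longrightarrow> continuous_on UNIV (\<lambda>x. H x z)"
proof (induction rule: Cl.induct)
  case (G1 "is" n)
  have "continuous_on UNIV (\<lambda>x. pdl is F (x - z))"
    by (rule continuous_on_compose2[OF Fc[OF G1]]) (auto intro: continuous_intros)
  moreover have "continuous_on UNIV (\<lambda>x::real\<times>real. cis (b * (fst z * snd z / 2 - fst z * snd x)))"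
    by (intro cont_cis_lin continuous_intros) auto
  ultimately show ?case by (intro continuous_intros) auto
next
  case (G2 "is")
  have "continuous_on UNIV (\<lambda>x. pdl is F (reflect_pt x - z))"
    by (rule continuous_on_compose2[OF Fc[OF G2]]) (auto intro: continuous_intros cont_reflect)
  then show ?case by (intro continuous_intros) auto
qed (auto intro: continuous_intros)

lemma norm_reflect[simp]: "norm (reflect_pt x) = norm x"
  by (cases x) (simp add: reflect_pt_def norm_Pair)

lemma Cl_supp: "H \<in> Cl \<Longrightarrow> norm z < norm x - Rk \<Longrightarrow> H x z = 0"
proof (induction rule: Cl.induct)
  case (G1 "is" n)
  have "norm x - norm z \<le> norm (x - z)" by (rule norm_triangle_ineq2)
  then have "x - z \<notin> K" using G1 Rk[of "x - z"] by auto
  then show ?case using Fz[OF G1(1)] by simp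
next
  case (G2 "is")
  have "norm (reflect_pt x) - norm z \<le> norm (reflect_pt x - z)" by (rule norm_triangle_ineq2)
  then have "reflect_pt x - z \<notin> K" using G2 Rk[of "reflect_pt x - z"] by auto
  then show ?case using Fz[OF G2(1)] by simp
qed auto

lemma Cl_bound: "H \<in> Cl \<Longrightarrow> \<exists>C. \<forall>x z. norm (H x z) \<le> C * exp (\<gamma> * norm z)"
proof (induction rule: Cl.induct)
  case (G1 "is" n)
  obtain M where M: "\<And>y. norm (pdl is F y) \<le> M" using Fb[OF G1] by blast
  have M0: "0 \<le> M" using M[of 0] norm_ge_zero order_trans by blast
  have "norm (of_real (fst z) ^ n * cis (b * (fst z * snd z / 2 - fst z * snd x)) * pdl is F (x - z))
      \<le> (M * fact n / \<gamma>^n) * exp (\<gamma> * norm z)" for x z :: "real \<times> real"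
  proof -
    have "\<bar>fst z\<bar> ^ n \<le> norm z ^ n"
      by (rule power_mono) (cases z, auto simp: norm_Pair real_sqrt_ge_abs1)
    also have "norm z ^ n = (\<gamma> * norm z)^n / \<gamma>^n" using \<gamma> by (simp add: power_mult_distrib)
    also have "\<dots> \<le> fact n * exp (\<gamma> * norm z) / \<gamma>^n"
      using \<gamma> by (intro divide_right_mono pow_le_fact_exp) auto
    finally have a: "\<bar>fst z\<bar> ^ n \<le> fact n * exp (\<gamma> * norm z) / \<gamma>^n" .
    have "norm (of_real (fst z) ^ n * cis (b * (fst z * snd z / 2 - fst z * snd x)) * pdl is F (x - z))
        = \<bar>fst z\<bar> ^ n * norm (pdl is F (x - z))" by (simp add: norm_mult norm_power)
    also have "\<dots> \<le> (fact n * exp (\<gamma> * norm z) / \<gamma>^n) * M"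
      using a M[of "x - z"] \<gamma> by (intro mult_mono) auto
    finally show ?thesis by (simp add: field_simps)
  qed
  then show ?case by blast
next
  case (G2 "is")
  obtain M where M: "\<And>y. norm (pdl is F y) \<le> M" using Fb[OF G2] by blast
  have "norm (cis (b * (fst z * snd z / 2)) * pdl is F (reflect_pt x - z)) \<le> M * exp (\<gamma> * norm z)" for x z :: "real \<times> real"
  proof -
    have "norm (cis (b * (fst z * snd z / 2)) * pdl is F (reflect_pt x - z)) \<le> M" using M by (simp add: norm_mult)
    also have "M \<le> M * exp (\<gamma> * norm z)"
    proof -
      have "0 \<le> M" using M[of 0] norm_ge_zero[of "pdl is F 0"] by linarith
      moreover have "1 \<le> exp (\<gamma> * norm z)" using \<gamma> by simp
      ultimately show ?thesis by (metis mult.right_neutral mult_left_mono)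
    qed
    finally show ?thesis .
  qed
  then show ?case by blast
next
  case (Add H1 H2)
  then obtain C1 C2 where C1: "\<And>x z. norm (H1 x z) \<le> C1 * exp (\<gamma> * norm z)"
    and C2: "\<And>x z. norm (H2 x z) \<le> C2 * exp (\<gamma> * norm z)" by blast
  have "norm (H1 x z + H2 x z) \<le> (C1 + C2) * exp (\<gamma> * norm z)" for x z
    using norm_triangle_ineq[of "H1 x z" "H2 x z"] C1[of x z] C2[of x z] by (simp add: distrib_right)
  then show ?case by blast
next
  case (Sm H c)
  then obtain C where C: "\<And>x z. norm (H x z) \<le> C * exp (\<gamma> * norm z)" by blast
  have "norm (c * H x z) \<le> (norm c * C) * exp (\<gamma> * norm z)" for x z
    using C[of x z] by (simp add: norm_mult mult.assoc mult_left_mono)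
  then show ?case by blast
qed

lemma pair_minus: "(a, c) - z = (a - fst z, c - snd (z::real\<times>real))"
  by (simp add: prod_eq_iff)

lemma reflect_pair: "reflect_pt (a, c) = (a, - c)" by (simp add: reflect_pt_def)

lemma Cl_d1: "H \<in> Cl \<Longrightarrow> \<exists>H'\<in>Cl. \<forall>x z. ((\<lambda>t. H (t, snd x) z) has_vector_derivative H' x z) (at (fst x))"
proof (induction rule: Cl.induct)
  case (G1 "is" n)
  have i1: "set (1#is) \<subseteq> {1,2}" using G1 by auto
  show ?case
  proof (intro bexI[OF _ Cl.G1[OF i1, of n]] allI)
    fix x z :: "real \<times> real"
    have "((\<lambda>s. pdl is F (s, snd x - snd z)) has_vector_derivative pdl (1#is) F (x - z)) (at (fst x - fst z))"
      using FD1[OF G1, of "x - z"] by simp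
    from has_vector_derivative_mult_right[OF shift_hvd[OF this],
        of "of_real (fst z) ^ n * cis (b * (fst z * snd z / 2 - fst z * snd x))"]
    show "((\<lambda>t. of_real (fst z) ^ n * cis (b * (fst z * snd z / 2 - fst z * snd (t, snd x))) * pdl is F ((t, snd x) - z))
        has_vector_derivative of_real (fst z) ^ n * cis (b * (fst z * snd z / 2 - fst z * snd x)) * pdl (1#is) F (x - z)) (at (fst x))"
      by (simp add: pair_minus mult.assoc)
  qed
next
  case (G2 "is")
  have i1: "set (1#is) \<subseteq> {1,2}" using G2 by auto
  show ?case
  proof (intro bexI[OF _ Cl.G2[OF i1]] allI)
    fix x z :: "real \<times> real"
    have "((\<lambda>s. pdl is F (s, - snd x - snd z)) has_vector_derivative pdl (1#is) F (reflect_pt x - z)) (at (fst x - fst z))"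
      using FD1[OF G2, of "reflect_pt x - z"] by (simp add: reflect_pt_def)
    from has_vector_derivative_mult_right[OF shift_hvd[OF this], of "cis (b * (fst z * snd z / 2))"]
    show "((\<lambda>t. cis (b * (fst z * snd z / 2)) * pdl is F (reflect_pt (t, snd x) - z))
        has_vector_derivative cis (b * (fst z * snd z / 2)) * pdl (1#is) F (reflect_pt x - z)) (at (fst x))"
      by (simp add: pair_minus reflect_pair)
  qed
next
  case (Add H1 H2)
  then obtain H1' H2' where "H1' \<in> Cl" "H2' \<in> Cl"
    and d1: "\<And>x z. ((\<lambda>t. H1 (t, snd x) z) has_vector_derivative H1' x z) (at (fst x))"
    and d2: "\<And>x z. ((\<lambda>t. H2 (t, snd x) z) has_vector_derivative H2' x z) (at (fst x))" by blast
  show ?case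
    by (rule bexI[OF _ Cl.Add[OF \<open>H1' \<in> Cl\<close> \<open>H2' \<in> Cl\<close>]])
       (intro allI has_vector_derivative_add[OF d1 d2])
next
  case (Sm H c)
  then obtain H' where "H' \<in> Cl"
    and d: "\<And>x z. ((\<lambda>t. H (t, snd x) z) has_vector_derivative H' x z) (at (fst x))" by blast
  show ?case
    by (rule bexI[OF _ Cl.Sm[OF \<open>H' \<in> Cl\<close>, of c]])
       (intro allI has_vector_derivative_mult_right[OF d])
qed

lemma Cl_d2: "H \<in> Cl \<Longrightarrow> \<exists>H'\<in>Cl. \<forall>x z. ((\<lambda>t. H (fst x, t) z) has_vector_derivative H' x z) (at (snd x))"
proof (induction rule: Cl.induct)
  case (G1 "is" n)
  have i2: "set (2#is) \<subseteq> {1,2}" using G1 by auto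
  show ?case
  proof (intro bexI[OF _ Cl.Add[OF Cl.G1[OF i2, of n] Cl.Sm[OF Cl.G1[OF G1, of "Suc n"], of "- \<i> * of_real b"]]] allI)
    fix x z :: "real \<times> real"
    have "((\<lambda>s. pdl is F (fst x - fst z, s)) has_vector_derivative pdl (2#is) F (x - z)) (at (snd x - snd z))"
      using FD2[OF G1, of "x - z"] by simp
    note dF = shift_hvd[OF this]
    note dc = cis_lin_hvd[of b "fst z * snd z / 2" "fst z" "snd x"]
    from has_vector_derivative_mult_right[OF has_vector_derivative_mult[OF dc dF], of "of_real (fst z) ^ n"]
    have "((\<lambda>t. of_real (fst z) ^ n * (cis (b * (fst z * snd z / 2 - fst z * t)) * pdl is F (fst x - fst z, t - snd z)))
        has_vector_derivative of_real (fst z) ^ n * (cis (b * (fst z * snd z / 2 - fst z * snd x)) * pdl (2#is) F (x - z)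
          + \<i> * complex_of_real (- b * fst z) * cis (b * (fst z * snd z / 2 - fst z * snd x)) * pdl is F (fst x - fst z, snd x - snd z))) (at (snd x))" (is "(_ has_vector_derivative ?D) _") .
    moreover have xz: "(fst x - fst z, snd x - snd z) = x - z" by (simp add: prod_eq_iff)
    have "?D = of_real (fst z) ^ n * cis (b * (fst z * snd z / 2 - fst z * snd x)) * pdl (2#is) F (x - z)
          + (- \<i> * of_real b) * (of_real (fst z) ^ Suc n * cis (b * (fst z * snd z / 2 - fst z * snd x)) * pdl is F (x - z))"
      unfolding xz by (simp add: algebra_simps)
    moreover have "(\<lambda>t. of_real (fst z) ^ n * cis (b * (fst z * snd z / 2 - fst z * snd (fst x, t))) * pdl is F ((fst x, t) - z))
      = (\<lambda>t. of_real (fst z) ^ n * (cis (b * (fst z * snd z / 2 - fst z * t)) * pdl is F (fst x - fst z, t - snd z)))"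
      by (simp add: pair_minus mult.assoc)
    ultimately show "((\<lambda>t. of_real (fst z) ^ n * cis (b * (fst z * snd z / 2 - fst z * snd (fst x, t))) * pdl is F ((fst x, t) - z))
        has_vector_derivative of_real (fst z) ^ n * cis (b * (fst z * snd z / 2 - fst z * snd x)) * pdl (2#is) F (x - z)
          + (- \<i> * of_real b) * (of_real (fst z) ^ Suc n * cis (b * (fst z * snd z / 2 - fst z * snd x)) * pdl is F (x - z))) (at (snd x))"
      by (metis (no_types, lifting) has_vector_derivative_eq_rhs)
  qed
next
  case (G2 "is")
  have i2: "set (2#is) \<subseteq> {1,2}" using G2 by auto
  show ?case
  proof (intro bexI[OF _ Cl.Sm[OF Cl.G2[OF i2], of "-1"]] allI)
    fix x z :: "real \<times> real"
    have "((\<lambda>s. pdl is F (fst x - fst z, s)) has_vector_derivative pdl (2#is) F (reflect_pt x - z)) (at (- snd x - snd z))"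
      using FD2[OF G2, of "reflect_pt x - z"] by (simp add: reflect_pt_def)
    from has_vector_derivative_mult_right[OF refl_hvd[OF this], of "cis (b * (fst z * snd z / 2))"]
    show "((\<lambda>t. cis (b * (fst z * snd z / 2)) * pdl is F (reflect_pt (fst x, t) - z))
        has_vector_derivative -1 * (cis (b * (fst z * snd z / 2)) * pdl (2#is) F (reflect_pt x - z))) (at (snd x))"
      by (simp add: pair_minus reflect_pair)
  qed
next
  case (Add H1 H2)
  then obtain H1' H2' where "H1' \<in> Cl" "H2' \<in> Cl"
    and d1: "\<And>x z. ((\<lambda>t. H1 (fst x, t) z) has_vector_derivative H1' x z) (at (snd x))"
    and d2: "\<And>x z. ((\<lambda>t. H2 (fst x, t) z) has_vector_derivative H2' x z) (at (snd x))" by blast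
  show ?case
    by (rule bexI[OF _ Cl.Add[OF \<open>H1' \<in> Cl\<close> \<open>H2' \<in> Cl\<close>]])
       (intro allI has_vector_derivative_add[OF d1 d2])
next
  case (Sm H c)
  then obtain H' where "H' \<in> Cl"
    and d: "\<And>x z. ((\<lambda>t. H (fst x, t) z) has_vector_derivative H' x z) (at (snd x))" by blast
  show ?case
    by (rule bexI[OF _ Cl.Sm[OF \<open>H' \<in> Cl\<close>, of c]])
       (intro allI has_vector_derivative_mult_right[OF d])
qed

end

context setting begin

definition TT :: "(real \<times> real \<Rightarrow> real \<times> real \<Rightarrow> complex) \<Rightarrow> real \<times> real \<Rightarrow> complex" where
  "TT H x = (LINT z|lborel. kk lam z * H x z)"

lemma kk_meas'[measurable]: "kk lam \<in> borel_measurable lborel"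
  using kk_meas by (simp add: measurable_lborel1)

lemma wt_int: "integrable lborel (\<lambda>z::real\<times>real. C * (norm (kk lam z) * exp (sqrt lam / 4 * norm z)))"
  using kk_int[OF lam] by (rule integrable_mult_right)

lemma dom:
  assumes "norm (h z) \<le> C * exp (\<gamma> * norm z)"
  shows "norm (kk lam z * h z) \<le> C * (norm (kk lam z) * exp (sqrt lam / 4 * norm z))"
proof -
  have C: "0 \<le> C" using assms norm_ge_zero[of "h z"]
    by (metis exp_gt_zero order_trans zero_le_mult_iff not_less less_le)
  have "norm (kk lam z * h z) \<le> norm (kk lam z) * (C * exp (\<gamma> * norm z))"
    unfolding norm_mult by (rule mult_left_mono[OF assms]) simp
  also have "\<dots> \<le> norm (kk lam z) * (C * exp (sqrt lam / 4 * norm z))"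
    using \<gamma> C by (intro mult_left_mono) (auto simp: \<gamma>_def)
  finally show ?thesis by (simp add: ac_simps)
qed

lemma Cl_meas[measurable]: "H \<in> Cl \<Longrightarrow> H x \<in> borel_measurable lborel"
  using borel_measurable_continuous_onI[OF Cl_cont_z] by (simp add: measurable_lborel1)

lemma Cl_bound': "H \<in> Cl \<Longrightarrow> \<exists>C\<ge>0. \<forall>x z. norm (H x z) \<le> C * exp (\<gamma> * norm z)"
proof -
  assume "H \<in> Cl"
  from Cl_bound[OF this] obtain C where C: "\<And>x z. norm (H x z) \<le> C * exp (\<gamma> * norm z)" by blast
  have "norm (H 0 0) \<le> C" using C[of 0 0] by simp
  then have "0 \<le> C" using norm_ge_zero order_trans by blast
  with C show ?thesis by blast
qed

lemma Cl_int: "H \<in> Cl \<Longrightarrow> integrable lborel (\<lambda>z. kk lam z * H x z)"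
proof -
  assume H: "H \<in> Cl"
  from Cl_bound'[OF H] obtain C where C: "C \<ge> 0" "\<And>x z. norm (H x z) \<le> C * exp (\<gamma> * norm z)" by blast
  show ?thesis
  proof (rule Bochner_Integration.integrable_bound[OF wt_int[of C]])
    show "(\<lambda>z. kk lam z * H x z) \<in> borel_measurable lborel" using H by measurable
    show "AE z in lborel. norm (kk lam z * H x z) \<le> norm (C * (norm (kk lam z) * exp (sqrt lam / 4 * norm z)))"
      using dom[of "H x", OF C(2)] C(1) by simp
  qed
qed

lemma TT_cont: "H \<in> Cl \<Longrightarrow> continuous_on UNIV (TT H)"
proof (rule continuous_at_imp_continuous_on, rule ballI)
  fix x :: "real \<times> real"
  assume H: "H \<in> Cl"
  from Cl_bound'[OF H] obtain C where C: "C \<ge> 0" "\<And>x z. norm (H x z) \<le> C * exp (\<gamma> * norm z)" by blast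
  show "isCont (TT H) x"
    unfolding continuous_at_sequentially comp_def
  proof (intro allI impI)
    fix X :: "nat \<Rightarrow> real \<times> real" assume X: "X \<longlonglongrightarrow> x"
    show "(\<lambda>n. TT H (X n)) \<longlonglongrightarrow> TT H x"
      unfolding TT_def
    proof (rule integral_dominated_convergence[OF _ _ wt_int[of C]])
      show "(\<lambda>z. kk lam z * H x z) \<in> borel_measurable lborel" using H by measurable
      show "(\<lambda>z. kk lam z * H (X i) z) \<in> borel_measurable lborel" for i using H by measurable
      show "AE z in lborel. (\<lambda>i. kk lam z * H (X i) z) \<longlonglongrightarrow> kk lam z * H x z"
      proof (rule AE_I2, rule tendsto_mult_left)
        fix z :: "real \<times> real"
        have "isCont (\<lambda>x. H x z) x" using Cl_cont_x[OF H, of z] continuous_on_eq_continuous_at[OF open_UNIV] by blast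
        then show "(\<lambda>i. H (X i) z) \<longlonglongrightarrow> H x z" by (rule isCont_tendsto_compose[OF _ X])
      qed
      show "AE z in lborel. norm (kk lam z * H (X i) z) \<le> C * (norm (kk lam z) * exp (sqrt lam / 4 * norm z))" for i
        using dom[of "H (X i)", OF C(2)] by simp
    qed
  qed
qed

lemma diff_under:
  fixes h h' :: "real \<Rightarrow> real \<times> real \<Rightarrow> complex"
  assumes hd: "\<And>t z. ((\<lambda>s. h s z) has_vector_derivative h' t z) (at t)"
    and hb: "\<And>t z. norm (h' t z) \<le> C * exp (\<gamma> * norm z)"
    and C: "C \<ge> 0"
    and hi: "\<And>t. integrable lborel (\<lambda>z. kk lam z * h t z)"
    and hi': "\<And>t. integrable lborel (\<lambda>z. kk lam z * h' t z)"
    and hm[measurable]: "\<And>t. h t \<in> borel_measurable lborel" "\<And>t. h' t \<in> borel_measurable lborel"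
  shows "((\<lambda>t. LINT z|lborel. kk lam z * h t z) has_vector_derivative (LINT z|lborel. kk lam z * h' t0 z)) (at t0)"
proof -
  define T where "T = (\<lambda>t. LINT z|lborel. kk lam z * h t z)"
  define D where "D = (LINT z|lborel. kk lam z * h' t0 z)"
  have "((\<lambda>y. norm (T y - T t0 - (y - t0) *\<^sub>R D) / norm (y - t0)) \<longlongrightarrow> 0) (at t0)"
    unfolding tendsto_at_iff_sequentially comp_def
  proof (intro allI impI)
    fix X :: "nat \<Rightarrow> real" assume X: "\<forall>i. X i \<in> UNIV - {t0}" and Xl: "X \<longlonglongrightarrow> t0"
    define g where "g i z = h (X i) z - h t0 z - (X i - t0) *\<^sub>R h' t0 z" for i z
    define q where "q i z = norm (kk lam z * g i z) / norm (X i - t0)" for i z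
    have eqT: "T (X i) - T t0 - (X i - t0) *\<^sub>R D = (LINT z|lborel. kk lam z * g i z)" for i
    proof -
      have "(LINT z|lborel. kk lam z * g i z) = (LINT z|lborel. kk lam z * h (X i) z - kk lam z * h t0 z - (X i - t0) *\<^sub>R (kk lam z * h' t0 z))"
        unfolding g_def by (simp add: algebra_simps)
      also have "\<dots> = T (X i) - T t0 - (X i - t0) *\<^sub>R D"
        unfolding T_def D_def using hi hi' by (simp add: integral_diff)
      finally show ?thesis by simp
    qed
    have le: "norm (T (X i) - T t0 - (X i - t0) *\<^sub>R D) / norm (X i - t0) \<le> (LINT z|lborel. q i z)" for i
      unfolding eqT q_def integral_divide_zero
      by (rule divide_right_mono[OF integral_norm_bound]) simp
    have "(\<lambda>i. LINT z|lborel. q i z) \<longlonglongrightarrow> (LINT z|lborel. 0 * q 0 z)"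
    proof (rule integral_dominated_convergence[OF _ _ wt_int[of "2*C"]])
      show "(\<lambda>z. 0 * q 0 z) \<in> borel_measurable lborel" by simp
      show "q i \<in> borel_measurable lborel" for i unfolding q_def g_def by measurable
      show "AE z in lborel. (\<lambda>i. q i z) \<longlonglongrightarrow> 0 * q 0 z"
      proof (rule AE_I2)
        fix z :: "real \<times> real"
        have "((\<lambda>y. norm (h y z - h t0 z - (y - t0) *\<^sub>R h' t0 z) / norm (y - t0)) \<longlongrightarrow> 0) (at t0)"
          using hd[where t=t0 and z=z] by (simp add: has_vector_derivative_def has_derivative_iff_norm)
        then have "(\<lambda>i. norm (g i z) / norm (X i - t0)) \<longlonglongrightarrow> 0"
          unfolding tendsto_at_iff_sequentially comp_def g_def using X Xl by blast
        from tendsto_mult[OF tendsto_const[of "norm (kk lam z)"] this]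
        show "(\<lambda>i. q i z) \<longlonglongrightarrow> 0 * q 0 z" by (simp add: q_def norm_mult)
      qed
      show "AE z in lborel. norm (q i z) \<le> 2 * C * (norm (kk lam z) * exp (sqrt lam / 4 * norm z))" for i
      proof (rule AE_I2)
        fix z :: "real \<times> real"
        have ne: "X i \<noteq> t0" using X by auto
        have m: "norm (h (X i) z - h t0 z) \<le> (C * exp (\<gamma> * norm z)) * \<bar>X i - t0\<bar>"
          by (rule mvt_vec[OF hd hb])
        have "norm (g i z) \<le> norm (h (X i) z - h t0 z) + norm ((X i - t0) *\<^sub>R h' t0 z)"
          unfolding g_def by (rule norm_triangle_ineq4)
        also have "\<dots> \<le> (C * exp (\<gamma> * norm z)) * \<bar>X i - t0\<bar> + \<bar>X i - t0\<bar> * (C * exp (\<gamma> * norm z))"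
          using m hb[of t0 z] by (intro add_mono) (auto intro: mult_left_mono)
        finally have "norm (g i z) \<le> (2 * C * exp (\<gamma> * norm z)) * \<bar>X i - t0\<bar>" by (simp add: algebra_simps)
        then have gn: "norm (g i z) / norm (X i - t0) \<le> 2 * C * exp (\<gamma> * norm z)"
          using ne by (simp add: divide_le_eq)
        have "norm (q i z) = norm (kk lam z) * (norm (g i z) / norm (X i - t0))"
          by (simp add: q_def norm_mult)
        also have "\<dots> \<le> norm (kk lam z) * (2 * C * exp (\<gamma> * norm z))"
          by (rule mult_left_mono[OF gn]) simp
        also have "\<dots> \<le> norm (kk lam z) * (2 * C * exp (sqrt lam / 4 * norm z))"
          using C \<gamma> by (intro mult_left_mono) (auto simp: \<gamma>_def)
        finally show "norm (q i z) \<le> 2 * C * (norm (kk lam z) * exp (sqrt lam / 4 * norm z))"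
          by (simp add: ac_simps)
      qed
    qed
    then have ql: "(\<lambda>i. LINT z|lborel. q i z) \<longlonglongrightarrow> 0" by simp
    show "(\<lambda>i. norm (T (X i) - T t0 - (X i - t0) *\<^sub>R D) / norm (X i - t0)) \<longlonglongrightarrow> 0"
      by (rule tendsto_sandwich[OF _ _ tendsto_const ql]) (use le in \<open>auto intro!: always_eventually\<close>)
  qed
  then show ?thesis
    unfolding T_def D_def by (simp add: has_vector_derivative_def has_derivative_iff_norm bounded_linear_scaleR_left)
qed

lemma TT_d1: "H \<in> Cl \<Longrightarrow> \<exists>H'\<in>Cl. \<forall>x. ((\<lambda>t. TT H (t, snd x)) has_vector_derivative TT H' x) (at (fst x))"
proof -
  assume H: "H \<in> Cl"
  from Cl_d1[OF H] obtain H' where H': "H' \<in> Cl"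
    and d: "\<And>x z. ((\<lambda>t. H (t, snd x) z) has_vector_derivative H' x z) (at (fst x))" by blast
  from Cl_bound'[OF H'] obtain C where C: "C \<ge> 0" "\<And>x z. norm (H' x z) \<le> C * exp (\<gamma> * norm z)" by blast
  have "((\<lambda>t. TT H (t, snd x)) has_vector_derivative TT H' x) (at (fst x))" for x
  proof -
    have "((\<lambda>t. LINT z|lborel. kk lam z * H (t, snd x) z) has_vector_derivative
        (LINT z|lborel. kk lam z * H' (fst x, snd x) z)) (at (fst x))"
    proof (rule diff_under[where C=C])
      show "((\<lambda>s. H (s, snd x) z) has_vector_derivative H' (t, snd x) z) (at t)" for t z
        using d[of "(t, snd x)" z] by simp
    qed (use C H H' Cl_int Cl_meas in auto)
    then show ?thesis by (simp add: TT_def)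
  qed
  with H' show ?thesis by blast
qed

lemma TT_d2: "H \<in> Cl \<Longrightarrow> \<exists>H'\<in>Cl. \<forall>x. ((\<lambda>t. TT H (fst x, t)) has_vector_derivative TT H' x) (at (snd x))"
proof -
  assume H: "H \<in> Cl"
  from Cl_d2[OF H] obtain H' where H': "H' \<in> Cl"
    and d: "\<And>x z. ((\<lambda>t. H (fst x, t) z) has_vector_derivative H' x z) (at (snd x))" by blast
  from Cl_bound'[OF H'] obtain C where C: "C \<ge> 0" "\<And>x z. norm (H' x z) \<le> C * exp (\<gamma> * norm z)" by blast
  have "((\<lambda>t. TT H (fst x, t)) has_vector_derivative TT H' x) (at (snd x))" for x
  proof -
    have "((\<lambda>t. LINT z|lborel. kk lam z * H (fst x, t) z) has_vector_derivative
        (LINT z|lborel. kk lam z * H' (fst x, snd x) z)) (at (snd x))"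
    proof (rule diff_under[where C=C])
      show "((\<lambda>s. H (fst x, s) z) has_vector_derivative H' (fst x, t) z) (at t)" for t z
        using d[of "(fst x, t)" z] by simp
    qed (use C H H' Cl_int Cl_meas in auto)
    then show ?thesis by (simp add: TT_def)
  qed
  with H' show ?thesis by blast
qed

lemma TT_pdl: "H \<in> Cl \<Longrightarrow> set is \<subseteq> {1,2} \<Longrightarrow> \<exists>H'\<in>Cl. pdl is (TT H) = TT H'"
proof (induction "is")
  case Nil
  then show ?case by auto
next
  case (Cons i "is")
  then obtain H1 where H1: "H1 \<in> Cl" and e: "pdl is (TT H) = TT H1" by auto
  have i: "i = 1 \<or> i = 2" using Cons by auto
  then show ?case
  proof
    assume i1: "i = 1"
    from TT_d1[OF H1] obtain H' where "H' \<in> Cl"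
      and d: "\<And>x. ((\<lambda>t. TT H1 (t, snd x)) has_vector_derivative TT H' x) (at (fst x))" by blast
    have "pd i (TT H1) = TT H'"
    proof (rule ext)
      fix x show "pd i (TT H1) x = TT H' x" using vector_derivative_at[OF d[of x]] i1 by (simp add: pd_def)
    qed
    then have "pdl (i#is) (TT H) = TT H'" by (simp add: e)
    with \<open>H' \<in> Cl\<close> show ?case by blast
  next
    assume i2: "i = 2"
    from TT_d2[OF H1] obtain H' where "H' \<in> Cl"
      and d: "\<And>x. ((\<lambda>t. TT H1 (fst x, t)) has_vector_derivative TT H' x) (at (snd x))" by blast
    have "pd i (TT H1) = TT H'"
    proof (rule ext)
      fix x show "pd i (TT H1) x = TT H' x" using vector_derivative_at[OF d[of x]] i2 by (simp add: pd_def)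
    qed
    then have "pdl (i#is) (TT H) = TT H'" by (simp add: e)
    with \<open>H' \<in> Cl\<close> show ?case by blast
  qed
qed

lemma TT_pd_diff: "H \<in> Cl \<Longrightarrow> i \<in> {1,2} \<Longrightarrow> pd_differentiable i (TT H) x"
proof -
  assume H: "H \<in> Cl" and i: "i \<in> {1,2}"
  from TT_d1[OF H] obtain H' where d1: "\<And>x. ((\<lambda>t. TT H (t, snd x)) has_vector_derivative TT H' x) (at (fst x))" by blast
  from TT_d2[OF H] obtain H'' where d2: "\<And>x. ((\<lambda>t. TT H (fst x, t)) has_vector_derivative TT H'' x) (at (snd x))" by blast
  show ?thesis using i differentiableI_vector[OF d1] differentiableI_vector[OF d2]
    by (auto simp: pd_differentiable_def)
qed

lemma TT_decay: "H \<in> Cl \<Longrightarrow> \<exists>C. \<forall>x. norm (TT H x) \<le> C * exp (- \<gamma> * norm x)"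
proof -
  assume H: "H \<in> Cl"
  from Cl_bound'[OF H] obtain C0 where C0: "C0 \<ge> 0" "\<And>x z. norm (H x z) \<le> C0 * exp (\<gamma> * norm z)" by blast
  define W where "W = (LINT z|lborel. norm (kk lam z) * exp (sqrt lam / 4 * norm z))"
  have "norm (TT H x) \<le> (C0 * exp (\<gamma> * Rk) * W) * exp (- \<gamma> * norm x)" for x
  proof -
    define c where "c = C0 * exp (\<gamma> * Rk) * exp (- \<gamma> * norm x)"
    have c: "c \<ge> 0" using C0 by (simp add: c_def)
    have "norm (TT H x) \<le> (LINT z|lborel. norm (kk lam z * H x z))"
      unfolding TT_def by (rule integral_norm_bound)
    also have "\<dots> \<le> (LINT z|lborel. c * (norm (kk lam z) * exp (sqrt lam / 4 * norm z)))"
    proof (rule integral_mono')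
      show "integrable lborel (\<lambda>z. c * (norm (kk lam z) * exp (sqrt lam / 4 * norm z)))" by (rule wt_int)
      fix z :: "real \<times> real"
      show "0 \<le> c * (norm (kk lam z) * exp (sqrt lam / 4 * norm z))" using c by simp
      show "norm (kk lam z * H x z) \<le> c * (norm (kk lam z) * exp (sqrt lam / 4 * norm z))"
      proof (cases "norm z < norm x - Rk")
        case True
        then show ?thesis using Cl_supp[OF H True] c by simp
      next
        case False
        have "norm (kk lam z * H x z) \<le> norm (kk lam z) * (C0 * exp (\<gamma> * norm z))"
          unfolding norm_mult by (rule mult_left_mono[OF C0(2)]) simp
        also have "\<dots> \<le> norm (kk lam z) * (C0 * exp (\<gamma> * norm z) * exp (\<gamma> * (norm z + Rk - norm x)))"
        proof -
          have "1 \<le> exp (\<gamma> * (norm z + Rk - norm x))" using False \<gamma> by simp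
          then have "C0 * exp (\<gamma> * norm z) * 1 \<le> C0 * exp (\<gamma> * norm z) * exp (\<gamma> * (norm z + Rk - norm x))"
            using C0 by (intro mult_left_mono) auto
          then show ?thesis by (intro mult_left_mono) auto
        qed
        also have "\<dots> = norm (kk lam z) * (C0 * exp (\<gamma> * norm z + \<gamma> * (norm z + Rk - norm x)))"
          by (simp add: exp_add mult.assoc)
        also have "\<gamma> * norm z + \<gamma> * (norm z + Rk - norm x) = \<gamma> * Rk + (- \<gamma> * norm x) + sqrt lam / 4 * norm z"
          by (simp add: \<gamma>_def field_simps)
        also have "norm (kk lam z) * (C0 * exp (\<gamma> * Rk + (- \<gamma> * norm x) + sqrt lam / 4 * norm z))
            = c * (norm (kk lam z) * exp (sqrt lam / 4 * norm z))"
          unfolding c_def exp_add by (simp add: ac_simps)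
        finally show ?thesis .
      qed
    qed
    also have "\<dots> = c * W" by (simp add: W_def)
    finally show ?thesis by (simp add: c_def ac_simps)
  qed
  then show ?thesis by blast
qed

end

lemma lborel_minus_translate: "lborel = distr lborel borel (\<lambda>z::real\<times>real. w - z)"
proof -
  have "lborel = density (distr lborel borel (\<lambda>x::real\<times>real. w + (-1) *\<^sub>R x)) (\<lambda>_. \<bar>-1::real\<bar>^DIM(real\<times>real))"
    by (rule lborel_affine) simp
  then show ?thesis by (simp add: density_1)
qed

lemma trans_int:
  fixes g :: "real \<times> real \<Rightarrow> complex"
  assumes gm: "g \<in> borel_measurable borel"
  shows "integrable lborel g \<longleftrightarrow> integrable lborel (\<lambda>z. g (w - z))"
    and "integral\<^sup>L lborel g = (LINT z|lborel. g (w - z))"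
proof -
  have T: "(\<lambda>z::real\<times>real. w - z) \<in> measurable lborel borel" by simp
  show "integrable lborel g \<longleftrightarrow> integrable lborel (\<lambda>z. g (w - z))"
    by (subst lborel_minus_translate[of w]) (rule integrable_distr_eq[OF T gm])
  show "integral\<^sup>L lborel g = (LINT z|lborel. g (w - z))"
    by (subst lborel_minus_translate[of w]) (rule integral_distr[OF T gm])
qed

lemma norm_refl_swap: "norm (x - reflect_pt y) = norm (reflect_pt x - y)"
  by (cases x, cases y) (simp add: reflect_pt_def norm_Pair power2_eq_square algebra_simps)

lemma cont_pdl0: "continuous_on UNIV g \<Longrightarrow> g \<in> borel_measurable borel"
  by (rule borel_measurable_continuous_onI)

context setting begin

definition H0 where "H0 = (\<lambda>x z. (of_real (fst z) ^ 0 * cis (b * (fst z * snd z / 2 - fst z * snd x)) * pdl [] F (x - z))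
   + (-1) * (cis (b * (fst z * snd z / 2)) * pdl [] F (reflect_pt x - z)))"

lemma H0_Cl: "H0 \<in> Cl"
  unfolding H0_def by (rule Cl.Add[OF Cl.G1 Cl.Sm[OF Cl.G2]]) auto

lemma Sb_eq:
  assumes KU: "K \<subseteq> upper_half"
  shows "Sb_op b lam F x = TT H0 x"
proof -
  have F0: "F y = 0" if "y \<notin> upper_half" for y using Fz[of "[]" y] that KU by auto
  have Fm[measurable]: "F \<in> borel_measurable borel" using cont_pdl0[OF Fc[of "[]"]] by simp
  have phm[measurable]: "(\<lambda>y. cis (b * phase x y)) \<in> borel_measurable borel"
    unfolding phase_def by (intro cont_pdl0 cont_cis_lin continuous_intros)
  define A where "A = (\<lambda>y. cis (b * phase x y) * kk lam (x - y) * F y)"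
  define B where "B = (\<lambda>y. cis (b * phase x y) * kk lam (reflect_pt x - y) * F y)"
  have Am: "A \<in> borel_measurable borel" unfolding A_def by measurable
  have Bm: "B \<in> borel_measurable borel" unfolding B_def reflect_pt_def by measurable
  define G1 where "G1 = (\<lambda>x z. of_real (fst z) ^ 0 * cis (b * (fst z * snd z / 2 - fst z * snd x)) * pdl [] F (x - z))"
  define G2 where "G2 = (\<lambda>x z. cis (b * (fst z * snd z / 2)) * pdl [] F (reflect_pt x - z))"
  have G1: "G1 \<in> Cl" unfolding G1_def by (rule Cl.G1) auto
  have G2: "G2 \<in> Cl" unfolding G2_def by (rule Cl.G2) auto
  have Ax: "A (x - z) = kk lam z * G1 x z" for z
  proof -
    have ph: "phase x (x - z) = fst z * snd z / 2 - fst z * snd x"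
      by (simp add: phase_def algebra_simps)
    show ?thesis unfolding A_def G1_def ph by (simp add: ac_simps)
  qed
  have Bx: "B (reflect_pt x - z) = kk lam z * G2 x z" for z
  proof -
    have ph: "phase x (reflect_pt x - z) = fst z * snd z / 2"
      by (simp add: phase_def reflect_pt_def algebra_simps)
    show ?thesis unfolding B_def G2_def ph by (simp add: ac_simps)
  qed
  have Ai: "integrable lborel A" and Aint: "integral\<^sup>L lborel A = TT G1 x"
    using trans_int[OF Am, of x] Cl_int[OF G1, of x] by (simp_all add: Ax TT_def)
  have Bi: "integrable lborel B" and Bint: "integral\<^sup>L lborel B = TT G2 x"
    using trans_int[OF Bm, of "reflect_pt x"] Cl_int[OF G2, of x] by (simp_all add: Bx TT_def)
  have "Sb_op b lam F x = (LINT y|lborel. A y - B y)"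
    unfolding Sb_op_def set_lebesgue_integral_def
  proof (rule Bochner_Integration.integral_cong[OF refl])
    fix y :: "real \<times> real"
    show "indicator upper_half y *\<^sub>R (Sb_kernel b lam x y * F y) = A y - B y"
    proof (cases "y \<in> upper_half")
      case True
      then show ?thesis
        by (simp add: A_def B_def Sb_kernel_def kk_def norm_refl_swap algebra_simps)
    next
      case False
      then show ?thesis by (simp add: A_def B_def F0)
    qed
  qed
  also have "\<dots> = TT G1 x - TT G2 x" using Ai Bi Aint Bint by simp
  also have "\<dots> = TT H0 x"
  proof -
    have "TT H0 x = (LINT z|lborel. kk lam z * G1 x z - kk lam z * G2 x z)"
      unfolding TT_def H0_def G1_def G2_def
      by (rule Bochner_Integration.integral_cong[OF refl]) (simp add: algebra_simps)
    also have "\<dots> = TT G1 x - TT G2 x"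
      unfolding TT_def by (rule Bochner_Integration.integral_diff[OF Cl_int[OF G1] Cl_int[OF G2]])
    finally show ?thesis by simp
  qed
  finally show ?thesis .
qed

end

lemma ext_eq:
  assumes e: "cont_ext S h g" and c: "continuous_on UNIV h" and x: "x \<in> closure S"
  shows "g x = h x"
proof -
  have cg: "continuous_on (closure S) g" using e by (simp add: cont_ext_def)
  have ch: "continuous_on (closure S) h" using c by (rule continuous_on_subset) simp
  have "closed {y \<in> closure S. g y - h y = 0}"
    by (rule continuous_closed_preimage_constant) (auto intro: continuous_on_diff cg ch)
  moreover have "S \<subseteq> {y \<in> closure S. g y - h y = 0}" using e closure_subset by (auto simp: cont_ext_def)
  ultimately have "closure S \<subseteq> {y \<in> closure S. g y - h y = 0}" by (rule closure_minimal[rotated])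
  then show ?thesis using x by auto
qed

lemma cl_uh: "closure upper_half = {x. snd x \<ge> 0}"
proof -
  have e: "upper_half = {x. (0::real, 1::real) \<bullet> x > 0}" by (auto simp: upper_half_def inner_prod_def)
  have c: "closure {x. (0::real, 1::real) \<bullet> x > 0} = {x. (0::real, 1::real) \<bullet> x \<ge> 0}"
    by (rule closure_halfspace_gt) (simp add: zero_prod_def)
  show ?thesis unfolding e c by (auto simp: inner_prod_def)
qed

lemma Sb_boundary: "Sb_op b lam f (x1, 0) = 0"
proof -
  have "Sb_kernel b lam (x1, 0) y = 0" for y
  proof -
    have "norm ((x1, 0) - y) = norm ((x1, 0) - reflect_pt y)"
      by (cases y) (simp add: reflect_pt_def norm_Pair)
    then show ?thesis by (simp add: Sb_kernel_def)
  qed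
  then show ?thesis by (simp add: Sb_op_def)
qed

theorem lemmaB3:
  fixes b lam :: real
  assumes "lam > 0"
  shows "\<forall>f\<in>Cc_infty upper_half. Sb_op b lam f \<in> classM"
proof
  fix f assume f: "f \<in> Cc_infty upper_half"
  obtain K where K: "compact K" "K \<subseteq> upper_half"
    "\<And>is y. set is \<subseteq> {1,2} \<Longrightarrow> y \<notin> K \<Longrightarrow> pdl is f y = 0"
    "\<And>is. set is \<subseteq> {1,2} \<Longrightarrow> continuous_on UNIV (pdl is f)"
    "\<And>is y. set is \<subseteq> {1,2} \<Longrightarrow> ((\<lambda>t. pdl is f (t, snd y)) has_vector_derivative pdl (1#is) f y) (at (fst y))"
    "\<And>is y. set is \<subseteq> {1,2} \<Longrightarrow> ((\<lambda>t. pdl is f (fst y, t)) has_vector_derivative pdl (2#is) f y) (at (snd y))"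
    by (rule cc_global[OF f]) blast
  interpret S: setting f K b lam
    by unfold_locales (use K assms in auto)
  define T where "T = Sb_op b lam f"
  have SbE: "T = S.TT S.H0" unfolding T_def by (rule ext) (rule S.Sb_eq[OF K(2)])
  have P: "\<exists>H\<in>S.Cl. pdl is T = S.TT H" if "set is \<subseteq> {1,2}" for "is"
    unfolding SbE by (rule S.TT_pdl[OF S.H0_Cl that])
  have sm: "smooth_on upper_half T"
    unfolding smooth_on_def
  proof (intro allI impI conjI ballI)
    fix "is" :: "nat list" assume i: "set is \<subseteq> {1,2}"
    from P[OF i] obtain H where H: "H \<in> S.Cl" "pdl is T = S.TT H" by blast
    show "continuous_on upper_half (pdl is T)"
      unfolding H(2) by (rule continuous_on_subset[OF S.TT_cont[OF H(1)]]) simp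
    fix j x assume "j \<in> {1::nat,2}" "x \<in> upper_half"
    then show "pd_differentiable j (pdl is T) x" unfolding H(2) by (intro S.TT_pd_diff[OF H(1)])
  qed
  have sc: "smooth_closure upper_half T"
    unfolding smooth_closure_def
  proof (intro conjI sm allI impI)
    fix "is" :: "nat list" assume i: "set is \<subseteq> {1,2}"
    from P[OF i] obtain H where H: "H \<in> S.Cl" "pdl is T = S.TT H" by blast
    show "\<exists>g. cont_ext upper_half (pdl is T) g"
      by (rule exI[of _ "pdl is T"])
         (auto simp: cont_ext_def H(2) intro: continuous_on_subset[OF S.TT_cont[OF H(1)]])
  qed
  have bd: "\<forall>g. cont_ext upper_half T g \<longrightarrow> (\<forall>x1. g (x1, 0) = 0)"
  proof (intro allI impI)
    fix g x1 assume g: "cont_ext upper_half T g"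
    have "(x1, 0) \<in> closure upper_half" by (simp add: cl_uh)
    from ext_eq[OF g _ this] have "g (x1, 0) = T (x1, 0)"
      using S.TT_cont[OF S.H0_Cl] SbE by simp
    then show "g (x1, 0) = 0" by (simp add: T_def Sb_boundary)
  qed
  have dca: "\<exists>C. \<forall>g. cont_ext upper_half (pdm \<alpha> T) g \<longrightarrow>
         (\<forall>x\<in>closure upper_half. norm (g x) \<le> C * exp (- S.\<gamma> * norm x))" for \<alpha> :: "nat \<times> nat"
  proof -
    have i: "set (replicate (fst \<alpha>) 1 @ replicate (snd \<alpha>) 2) \<subseteq> {1::nat,2}" by auto
    from P[OF i] obtain H where H: "H \<in> S.Cl" "pdm \<alpha> T = S.TT H" by (auto simp: pdm_def)
    from S.TT_decay[OF H(1)] obtain C where C: "\<And>x. norm (S.TT H x) \<le> C * exp (- S.\<gamma> * norm x)" by blast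
    show "\<exists>C. \<forall>g. cont_ext upper_half (pdm \<alpha> T) g \<longrightarrow>
         (\<forall>x\<in>closure upper_half. norm (g x) \<le> C * exp (- S.\<gamma> * norm x))"
    proof (intro exI[of _ C] allI impI ballI)
      fix g x assume g: "cont_ext upper_half (pdm \<alpha> T) g" and x: "x \<in> closure upper_half"
      have "g x = pdm \<alpha> T x" by (rule ext_eq[OF g _ x]) (simp add: H(2) S.TT_cont[OF H(1)])
      then show "norm (g x) \<le> C * exp (- S.\<gamma> * norm x)" using C[of x] H(2) by simp
    qed
  qed
  have dc: "\<exists>c>0. \<forall>\<alpha>::nat \<times> nat. \<exists>C. \<forall>g. cont_ext upper_half (pdm \<alpha> T) g \<longrightarrow>
         (\<forall>x\<in>closure upper_half. norm (g x) \<le> C * exp (- c * norm x))"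
    using S.\<gamma> dca by blast
  show "Sb_op b lam f \<in> classM"
    unfolding classM_def T_def[symmetric] using sc bd dc by blast
qed

end
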